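(* For any Markov system $\mathbb{M}=(a,b,[a],[b],[b^{-1}])$, the gaps of $X_\infty$ (components of $S^1\setminus X_\infty$) form a single orbit under the action of $\mathbb{G}(\mathbb{M})$.
   Context: A Markov system is a tuple $(a,b,[a],[b],[b^{-1}])$ with $a$ an orientation-preserving involution of $S^1$, $b$ an orientation-preserving homeomorphism of $S^1$ of period three, and $[a],[b],[b^{-1}]\subset S^1$ such that: (A) they are pairwise disjoint, each a union of $k$ disjoint closed intervals ($k\in\mathbb{N}$); components are $a$-, $b$-, $b^{-1}$-intervals; $X=[a]\cup[b]\cup[b^{-1}]$; (B) no two $a$-intervals are consecutive among the components of $X$ in circular order; likewise for $b$- and for $b^{-1}$-intervals; with principal gaps (gaps of $X$ between an $a$-interval and a $b^{\pm1}$-interval), complementary gaps (between a $b$- and a $b^{-1}$-interval), $b$-blocks (maximal intervals made of $b^{\pm1}$-intervals and complementary gaps) and $[[b]]$ the union of $b$-blocks: (C) $a([a])=[[b]]$; (D) $b([a])=[b]$, $b([b])=[b^{-1}]$; (E) $a$ maps principal gaps to principal gaps and exactly one of $b^{\pm1}$ maps a given principal gap to a principal gap; the graph on principal gaps joining $J$ to $a(J)$ and to that image is connected. $\mathbb{G}(\mathbb{M})$ is the subgroup of $\mathrm{Homeo}_+(S^1)$ generated by $a$ and $b$, and $X_\infty=\bigcap_{f\in\mathbb{G}(\mathbb{M})}f^{-1}(X)$. *)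

theory Defs
  imports "HOL-Analysis.Analysis"
begin

definition S1 :: "complex set" where
  "S1 = sphere 0 1"

text \<open>ccw x y z: the points x, y, z of the circle occur in this (counterclockwise)
  circular order, i.e. the triangle x y z is positively oriented.\<close>
definition ccw :: "complex \<Rightarrow> complex \<Rightarrow> complex \<Rightarrow> bool" where
  "ccw x y z \<longleftrightarrow> Im (cnj (y - x) * (z - x)) > 0"

definition carc :: "complex \<Rightarrow> complex \<Rightarrow> complex set" where
  "carc u v = {z \<in> S1. z = u \<or> z = v \<or> ccw u z v}"

definition is_closed_interval :: "complex set \<Rightarrow> bool" where
  "is_closed_interval I \<longleftrightarrow> (\<exists>u\<in>S1. \<exists>v\<in>S1. u \<noteq> v \<and> I = carc u v)"

definition union_of_intervals :: "nat \<Rightarrow> complex set \<Rightarrow> bool" where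
  "union_of_intervals k A \<longleftrightarrow>
     (\<exists>\<I>. finite \<I> \<and> card \<I> = k \<and> (\<forall>I\<in>\<I>. is_closed_interval I)
          \<and> pairwise disjnt \<I> \<and> A = \<Union>\<I>)"

definition homeo_plus :: "(complex \<Rightarrow> complex) \<Rightarrow> bool" where
  "homeo_plus f \<longleftrightarrow> (\<exists>g. homeomorphism S1 S1 f g) \<and>
     (\<forall>x\<in>S1. \<forall>y\<in>S1. \<forall>z\<in>S1. ccw x y z \<longrightarrow> ccw (f x) (f y) (f z))"

definition gaps :: "complex set \<Rightarrow> complex set set" where
  "gaps Y = components (S1 - Y)"

definition between :: "complex set \<Rightarrow> complex set \<Rightarrow> complex set \<Rightarrow> bool" where
  "between J I1 I2 \<longleftrightarrow> I1 \<noteq> I2 \<and> closure J \<inter> I1 \<noteq> {} \<and> closure J \<inter> I2 \<noteq> {}"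

definition principal_gaps :: "complex set \<Rightarrow> complex set \<Rightarrow> complex set \<Rightarrow> complex set set" where
  "principal_gaps A B Bi = {J \<in> gaps (A \<union> B \<union> Bi).
     \<exists>I1\<in>components A. \<exists>I2\<in>components B \<union> components Bi. between J I1 I2}"

definition complementary_gaps :: "complex set \<Rightarrow> complex set \<Rightarrow> complex set \<Rightarrow> complex set set" where
  "complementary_gaps A B Bi = {J \<in> gaps (A \<union> B \<union> Bi).
     \<exists>I1\<in>components B. \<exists>I2\<in>components Bi. between J I1 I2}"

definition bblocks_union :: "complex set \<Rightarrow> complex set \<Rightarrow> complex set \<Rightarrow> complex set" where
  "bblocks_union A B Bi = B \<union> Bi \<union> \<Union>(complementary_gaps A B Bi)"

definition no_two_consecutive :: "complex set \<Rightarrow> complex set \<Rightarrow> bool" where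
  "no_two_consecutive X C \<longleftrightarrow>
     \<not> (\<exists>J\<in>gaps X. \<exists>I1\<in>components C. \<exists>I2\<in>components C. between J I1 I2)"

definition markov_system ::
  "(complex \<Rightarrow> complex) \<Rightarrow> (complex \<Rightarrow> complex) \<Rightarrow> complex set \<Rightarrow> complex set \<Rightarrow> complex set \<Rightarrow> bool" where
  "markov_system a b A B Bi \<longleftrightarrow>
     homeo_plus a \<and> (\<forall>x\<in>S1. a (a x) = x) \<and> (\<exists>x\<in>S1. a x \<noteq> x) \<and>
     homeo_plus b \<and> (\<forall>x\<in>S1. b (b (b x)) = x) \<and> (\<exists>x\<in>S1. b x \<noteq> x) \<and>
     \<comment> \<open>(A)\<close>
     disjnt A B \<and> disjnt A Bi \<and> disjnt B Bi \<and>
     (\<exists>k. union_of_intervals k A \<and> union_of_intervals k B \<and> union_of_intervals k Bi) \<and>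
     \<comment> \<open>(B)\<close>
     no_two_consecutive (A \<union> B \<union> Bi) A \<and>
     no_two_consecutive (A \<union> B \<union> Bi) B \<and>
     no_two_consecutive (A \<union> B \<union> Bi) Bi \<and>
     \<comment> \<open>(C)\<close>
     a ` A = bblocks_union A B Bi \<and>
     \<comment> \<open>(D)\<close>
     b ` A = B \<and> b ` B = Bi \<and>
     \<comment> \<open>(E)\<close>
     (let P = principal_gaps A B Bi; bi = inv_into S1 b;
          E = {(J, a ` J) | J. J \<in> P} \<union> {(J, b ` J) | J. J \<in> P \<and> b ` J \<in> P}
              \<union> {(J, bi ` J) | J. J \<in> P \<and> bi ` J \<in> P}
      in (\<forall>J\<in>P. a ` J \<in> P) \<and>
         (\<forall>J\<in>P. (b ` J \<in> P) \<noteq> (bi ` J \<in> P)) \<and>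
         (\<forall>J\<in>P. \<forall>K\<in>P. (J, K) \<in> (E \<union> E\<inverse>)\<^sup>*))"

inductive_set markov_group :: "(complex \<Rightarrow> complex) \<Rightarrow> (complex \<Rightarrow> complex) \<Rightarrow> (complex \<Rightarrow> complex) set"
  for a b where
  id: "id \<in> markov_group a b"
| mult_a: "f \<in> markov_group a b \<Longrightarrow> a \<circ> f \<in> markov_group a b"
| mult_b: "f \<in> markov_group a b \<Longrightarrow> b \<circ> f \<in> markov_group a b"
| mult_a_inv: "f \<in> markov_group a b \<Longrightarrow> inv_into S1 a \<circ> f \<in> markov_group a b"
| mult_b_inv: "f \<in> markov_group a b \<Longrightarrow> inv_into S1 b \<circ> f \<in> markov_group a b"

definition X_infty :: "(complex \<Rightarrow> complex) \<Rightarrow> (complex \<Rightarrow> complex) \<Rightarrow> complex set \<Rightarrow> complex set" where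
  "X_infty a b X = (\<Inter>f\<in>markov_group a b. {x \<in> S1. f x \<in> X})"

end

theory Submission
  imports Defs
begin


lemma sin_identity:
  fixes x y :: real
  shows "sin (2*y - 2*x) + sin (2*x) - sin (2*y) = 4 * sin x * sin y * sin (y - x)"
proof -
  have e: "2*y - 2*x = 2*(y-x)" by simp
  have c: "(sin x)^2 + (cos x)^2 = 1" "(sin y)^2 + (cos y)^2 = 1" by simp_all
  show ?thesis unfolding e sin_double sin_diff cos_diff
    using c by algebra
qed

lemma S1_cis: assumes "z \<in> S1" shows "\<exists>t. 0 \<le> t \<and> t < 2*pi \<and> z = cis t"
proof -
  have n: "norm z = 1" using assms by (simp add: S1_def)
  have "is_Arg z (Arg2pi z)" using Arg2pi by blast
  then have "z = exp (\<i> * of_real (Arg2pi z))" using n by (simp add: is_Arg_def)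
  then show ?thesis using Arg2pi[of z] by (metis cis_conv_exp)
qed

lemma cis_eq_1_range: assumes "cis s = 1" "-2*pi < s" "s < 2*pi" shows "s = 0"
proof -
  have "cos s = 1" using assms(1) by (metis cis.sel(1) one_complex.sel(1))
  then obtain n::int where n: "s = real_of_int n * 2 * pi" unfolding cos_one_2pi_int by blast
  have h1: "(-1) * (2*pi) < real_of_int n * (2 * pi)" using assms(2) n by simp
  then have "-1 < real_of_int n" using mult_less_cancel_right_pos[of "2*pi" "-1" "real_of_int n"] pi_gt_zero by simp
  then have "-1 < n" by simp
  moreover have h2: "real_of_int n * (2*pi) < 1 * (2 * pi)" using assms(3) n by simp
  then have "real_of_int n < 1" using mult_less_cancel_right_pos[of "2*pi" "real_of_int n" 1] pi_gt_zero by simp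
  then have "n < 1" by simp
  ultimately have "n = 0" by simp
  then show ?thesis using n by simp
qed

lemma cis_inj_range: assumes "cis s = cis t" "0 \<le> s" "s < 2*pi" "0 \<le> t" "t < 2*pi" shows "s = t"
proof -
  have "cis (s - t) = 1" using assms(1) by (metis cis_divide divide_self_if cis_neq_zero)
  then have "s - t = 0" using cis_eq_1_range assms by force
  then show ?thesis by simp
qed

lemma ccw_cis: "ccw (cis r) (cis (r+s)) (cis (r+t)) \<longleftrightarrow> sin (t - s) + sin s - sin t > 0"
proof -
  have "cnj (cis (r+s) - cis r) * (cis (r+t) - cis r) =
     cis (-(r+s)) * cis (r+t) - cis (-(r+s)) * cis r - cis (-r) * cis (r+t) + cis (-r) * cis r"
    by (simp add: cis_cnj algebra_simps)
  also have "\<dots> = cis (t - s) - cis (-s) - cis t + 1"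
    by (simp only: cis_mult) (simp add: algebra_simps)
  finally have "cnj (cis (r+s) - cis r) * (cis (r+t) - cis r) = cis (t - s) - cis (-s) - cis t + 1" .
  then show ?thesis unfolding ccw_def by simp
qed

lemma sign_lemma:
  assumes "0 \<le> s" "s < 2*pi" "0 < t" "t < 2*pi"
  shows "sin (t - s) + sin s - sin t > 0 \<longleftrightarrow> 0 < s \<and> s < t"
proof -
  have eq: "sin (t - s) + sin s - sin t = 4 * sin (s/2) * sin (t/2) * sin (t/2 - s/2)"
    using sin_identity[where x="s/2" and y="t/2"] by simp
  have ty: "sin (t/2) > 0" using assms by (intro sin_gt_zero) auto
  show ?thesis
  proof (cases "s = 0")
    case True then show ?thesis using eq by simp
  next
    case False
    then have sx: "sin (s/2) > 0" using assms by (intro sin_gt_zero) auto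
    show ?thesis
    proof (cases "s < t")
      case True
      then have "sin (t/2 - s/2) > 0" using assms by (intro sin_gt_zero) auto
      then show ?thesis using eq sx ty True False assms by simp
    next
      case f2: False
      then have "sin (s/2 - t/2) \<ge> 0" using assms by (intro sin_ge_zero) auto
      then have "sin (t/2 - s/2) \<le> 0" by (metis minus_diff_eq neg_0_le_iff_le sin_minus)
      then have "4 * sin (s/2) * sin (t/2) * sin (t/2 - s/2) \<le> 0"
        using sx ty by (simp add: mult_nonneg_nonpos)
      then show ?thesis using eq f2 by simp
    qed
  qed
qed

lemma arc_param:
  assumes u: "u \<in> S1" and v: "v \<in> S1" and uv: "u \<noteq> v"
  shows "\<exists>r t. 0 < t \<and> t < 2*pi \<and> carc u v = (\<lambda>s. cis (r+s)) ` {0..t}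
           \<and> S1 - carc u v = (\<lambda>s. cis (r+s)) ` {t<..<2*pi}"
proof -
  obtain r where r: "u = cis r" using S1_cis[OF u] by blast
  have nu: "norm u = 1" using u by (simp add: S1_def)
  have cu: "cnj u * u = 1" using nu by (metis complex_norm_square mult.commute of_real_1 power_one)
  have rep: "\<exists>s. 0 \<le> s \<and> s < 2*pi \<and> z = cis (r+s)" if "z \<in> S1" for z
  proof -
    have "z * cnj u \<in> S1" using that nu by (simp add: S1_def norm_mult)
    then obtain s where s: "0 \<le> s" "s < 2*pi" "z * cnj u = cis s" using S1_cis by blast
    have "z = z * cnj u * u" using cu by (simp add: mult.assoc)
    also have "\<dots> = cis (r+s)" using s(3) r by (simp add: cis_mult add.commute)
    finally show ?thesis using s by blast
  qed
  obtain t where t: "0 \<le> t" "t < 2*pi" "v = cis (r+t)" using rep[OF v] by blast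
  have t0: "t \<noteq> 0" using t r uv by auto
  have key: "cis (r+s) \<in> carc u v \<longleftrightarrow> s \<le> t" if s: "0 \<le> s" "s < 2*pi" for s
  proof -
    have e1: "cis (r+s) = u \<longleftrightarrow> s = 0"
    proof
      assume "cis (r+s) = u"
      then have "cis (r+s) = cis (r+0)" using r by simp
      then have "cis s = cis 0" by (metis cis_divide add_diff_cancel_left')
      then show "s = 0" using cis_inj_range[of s 0] s by simp
    qed (use r in simp)
    have e2: "cis (r+s) = v \<longleftrightarrow> s = t"
    proof
      assume "cis (r+s) = v"
      then have "cis (r+s) = cis (r+t)" using t by simp
      then have "cis s = cis t" by (metis cis_divide add_diff_cancel_left')
      then show "s = t" using cis_inj_range[of s t] s t by simp
    qed (use t in simp)
    have e3: "ccw u (cis (r+s)) v \<longleftrightarrow> 0 < s \<and> s < t"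
      using ccw_cis[of r s t] sign_lemma[of s t] s t t0 r by simp
    show ?thesis unfolding carc_def using e1 e2 e3 s t0 t by (auto simp: S1_def)
  qed
  have A: "carc u v = (\<lambda>s. cis (r+s)) ` {0..t}"
  proof
    show "carc u v \<subseteq> (\<lambda>s. cis (r+s)) ` {0..t}"
    proof
      fix z assume z: "z \<in> carc u v"
      then have "z \<in> S1" by (simp add: carc_def)
      then obtain s where s: "0 \<le> s" "s < 2*pi" "z = cis (r+s)" using rep by blast
      then have "s \<le> t" using key z by blast
      then show "z \<in> (\<lambda>s. cis (r+s)) ` {0..t}" using s by auto
    qed
    show "(\<lambda>s. cis (r+s)) ` {0..t} \<subseteq> carc u v" using key t by auto
  qed
  have B: "S1 - carc u v = (\<lambda>s. cis (r+s)) ` {t<..<2*pi}"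
  proof
    show "S1 - carc u v \<subseteq> (\<lambda>s. cis (r+s)) ` {t<..<2*pi}"
    proof
      fix z assume z: "z \<in> S1 - carc u v"
      then obtain s where s: "0 \<le> s" "s < 2*pi" "z = cis (r+s)" using rep by blast
      then have "\<not> s \<le> t" using key z by blast
      then show "z \<in> (\<lambda>s. cis (r+s)) ` {t<..<2*pi}" using s by auto
    qed
    show "(\<lambda>s. cis (r+s)) ` {t<..<2*pi} \<subseteq> S1 - carc u v"
      using key t by (auto simp: S1_def)
  qed
  show ?thesis using A B t t0 by (intro exI[of _ r] exI[of _ t]) auto
qed

lemma cont_cis_shift: "continuous_on S (\<lambda>s. cis (r+s))"
  unfolding cis_conv_exp by (intro continuous_intros)

lemma arc_props:
  assumes "is_closed_interval I"
  shows "compact I" "connected I" "connected (S1 - I)" "I \<subseteq> S1" "I \<noteq> {}"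
proof -
  obtain u v where uv: "u \<in> S1" "v \<in> S1" "u \<noteq> v" "I = carc u v"
    using assms by (auto simp: is_closed_interval_def)
  obtain r t where rt: "0 < t" "t < 2*pi" "carc u v = (\<lambda>s. cis (r+s)) ` {0..t}"
           "S1 - carc u v = (\<lambda>s. cis (r+s)) ` {t<..<2*pi}"
    using arc_param[OF uv(1-3)] by blast
  show "compact I" unfolding uv(4) rt(3)
    by (intro compact_continuous_image cont_cis_shift compact_Icc)
  show "connected I" unfolding uv(4) rt(3)
    by (intro connected_continuous_image cont_cis_shift connected_Icc)
  show "connected (S1 - I)" unfolding uv(4) rt(4)
    by (intro connected_continuous_image cont_cis_shift) (simp add: is_interval_connected)
  show "I \<subseteq> S1" using uv by (auto simp: carc_def)
  show "I \<noteq> {}" using uv by (auto simp: carc_def)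
qed




section \<open>Generic topology on S1\<close>

lemma S1_closed: "closed S1" by (simp add: S1_def)
lemma S1_connected: "connected S1" unfolding S1_def by (rule connected_sphere) simp
lemma S1_lc: "locally connected S1" unfolding S1_def by (rule locally_connected_sphere)

lemma homeo_components:
  assumes h: "homeomorphism S1 S1 h h'" and T: "T \<subseteq> S1" and C: "C \<in> components T"
  shows "h ` C \<in> components (h ` T)"
proof -
  have CT: "C \<subseteq> T" using C in_components_subset by blast
  have ch: "continuous_on S1 h" and ch': "continuous_on S1 h'"
    using h by (auto simp: homeomorphism_def)
  have hS: "h ` S1 = S1" "h' ` S1 = S1" using h by (auto simp: homeomorphism_def)
  have inv1: "\<And>x. x \<in> S1 \<Longrightarrow> h' (h x) = x" and inv2: "\<And>y. y \<in> S1 \<Longrightarrow> h (h' y) = y"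
    using h by (auto simp: homeomorphism_def)
  have cC: "connected C" using C in_components_connected by blast
  show ?thesis unfolding in_components_maximal
  proof (intro conjI allI impI)
    show "h ` C \<noteq> {}" using C in_components_nonempty by blast
    show "h ` C \<subseteq> h ` T" using CT by blast
    show "connected (h ` C)"
      using cC CT T by (intro connected_continuous_image continuous_on_subset[OF ch]) auto
    fix D assume D: "D \<noteq> {} \<and> h ` C \<subseteq> D \<and> D \<subseteq> h ` T \<and> connected D"
    have DS: "D \<subseteq> S1" using D T hS by blast
    have f1: "connected (h' ` D)"
      using D DS by (intro connected_continuous_image continuous_on_subset[OF ch']) auto
    have f2: "C \<subseteq> h' ` D"
    proof
      fix x assume "x \<in> C"
      then have "h x \<in> D" "h' (h x) = x" using D inv1 CT T by auto
      then show "x \<in> h' ` D" by force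
    qed
    have f3: "h' ` D \<subseteq> T"
    proof
      fix z assume "z \<in> h' ` D"
      then obtain y where y: "y \<in> D" "z = h' y" by blast
      then obtain t where "t \<in> T" "y = h t" using D by blast
      then show "z \<in> T" using y inv1 T by auto
    qed
    have f4: "h' ` D \<noteq> {}" using D by blast
    have maxC: "\<And>D. D \<noteq> {} \<Longrightarrow> C \<subseteq> D \<Longrightarrow> D \<subseteq> T \<Longrightarrow> connected D \<Longrightarrow> D = C"
      using C unfolding in_components_maximal by blast
    have "h' ` D = C" by (rule maxC[OF f4 f2 f3 f1])
    then have "h ` (h' ` D) = h ` C" by simp
    moreover have "h ` (h' ` D) = D"
    proof -
      have "h ` (h' ` D) = (\<lambda>y. h (h' y)) ` D" by (simp add: image_image)
      also have "\<dots> = (\<lambda>y. y) ` D" using DS inv2 by (intro image_cong) auto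
      finally show ?thesis by simp
    qed
    ultimately show "D = h ` C" by simp
  qed
qed

lemma homeo_diff:
  assumes h: "homeomorphism S1 S1 h h'" and Y: "Y \<subseteq> S1"
  shows "h ` (S1 - Y) = S1 - h ` Y"
proof -
  have inj: "inj_on h S1" using h by (rule inj_on_inverseI[OF homeomorphism_apply1])
  have hS: "h ` S1 = S1" using h by (simp add: homeomorphism_image1)
  show ?thesis using inj_on_image_set_diff[OF inj, of S1 Y] Y hS by simp
qed

lemma gap_openin:
  assumes "closed Y" "G \<in> components (S1 - Y)"
  shows "openin (top_of_set S1) G"
proof -
  have "openin (top_of_set S1) (S1 - Y)" unfolding openin_open
    using assms(1) by (intro exI[of _ "- Y"]) (auto simp: open_Compl)
  then show ?thesis using S1_lc assms(2) locally_connected_open_component by blast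
qed

lemma gap_closure:
  assumes Y: "closed Y" and G: "G \<in> components (S1 - Y)" and p: "p \<in> closure G" "p \<in> S1 - Y"
  shows "p \<in> G"
proof -
  define H where "H = connected_component_set (S1 - Y) p"
  have H: "H \<in> components (S1 - Y)" using p(2) by (simp add: H_def componentsI)
  then have "openin (top_of_set S1) H" using gap_openin Y by blast
  then obtain W where W: "open W" "H = S1 \<inter> W" by (auto simp: openin_open)
  have pH: "p \<in> H" using p(2) by (simp add: H_def)
  then have "W \<inter> closure G \<noteq> {}" using W p by blast
  then have "W \<inter> G \<noteq> {}" using open_Int_closure_eq_empty[OF W(1)] by blast
  then obtain y where y: "y \<in> W" "y \<in> G" by blast
  have GS: "G \<subseteq> S1" using G in_components_subset by blast
  then have "y \<in> H" using y W by blast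
  obtain x where x: "G = connected_component_set (S1 - Y) x" using G by (auto simp: components_iff)
  have "G = connected_component_set (S1 - Y) y" using x y connected_component_eq by metis
  moreover have "H = connected_component_set (S1 - Y) y" using \<open>y \<in> H\<close> H_def connected_component_eq by metis
  ultimately show ?thesis using pH by simp
qed

lemma components_restrict:
  assumes G: "G \<in> components T" and GR: "G \<subseteq> R" and RT: "R \<subseteq> T"
  shows "G \<in> components R"
proof -
  have m: "G \<noteq> {}" "connected G"
    "\<And>D. D \<noteq> {} \<Longrightarrow> G \<subseteq> D \<Longrightarrow> D \<subseteq> T \<Longrightarrow> connected D \<Longrightarrow> D = G"
    using G unfolding in_components_maximal by auto
  show ?thesis unfolding in_components_maximal
  proof (intro conjI allI impI)
    fix D assume D: "D \<noteq> {} \<and> G \<subseteq> D \<and> D \<subseteq> R \<and> connected D"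
    show "D = G" using D RT by (intro m(3)) auto
  qed (use m GR in auto)
qed

lemma connected_sep:
  assumes C: "connected C" and cl: "closed P" "closed Q" and dj: "P \<inter> Q = {}"
    and sub: "C \<subseteq> P \<union> Q" and x: "x \<in> C" "x \<in> P"
  shows "C \<subseteq> P"
proof (rule ccontr)
  assume "\<not> C \<subseteq> P"
  then have "Q \<inter> C \<noteq> {}" using sub by auto
  then have ex: "\<exists>A B. closed A \<and> closed B \<and> C \<subseteq> A \<union> B \<and> A \<inter> B \<inter> C = {} \<and> A \<inter> C \<noteq> {} \<and> B \<inter> C \<noteq> {}"
    using cl dj sub x by (intro exI[of _ P] exI[of _ Q]) auto
  have "\<not> (\<exists>A B. closed A \<and> closed B \<and> C \<subseteq> A \<union> B \<and> A \<inter> B \<inter> C = {} \<and> A \<inter> C \<noteq> {} \<and> B \<inter> C \<noteq> {})"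
    using connected_closed[THEN iffD1, OF C] .
  then show False using ex by contradiction
qed

lemma component_in_closed_part:
  assumes "closed P" "closed Q" "P \<inter> Q = {}" "x \<in> P"
  shows "connected_component_set (P \<union> Q) x = connected_component_set P x"
proof
  have "connected_component_set (P \<union> Q) x \<subseteq> P"
    using assms by (intro connected_sep[of _ P Q x]) (auto simp: connected_component_subset)
  then show "connected_component_set (P \<union> Q) x \<subseteq> connected_component_set P x"
    using assms by (intro connected_component_maximal) auto
  show "connected_component_set P x \<subseteq> connected_component_set (P \<union> Q) x"
    by (simp add: connected_component_mono)
qed

section \<open>Unions of intervals\<close>

lemma uoi_props:
  assumes "union_of_intervals k A"
  shows "closed A" "A \<subseteq> S1" "k = 0 \<Longrightarrow> A = {}" "0 < k \<Longrightarrow> A \<noteq> {}"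
    "p \<in> A \<Longrightarrow> \<exists>I. is_closed_interval I \<and> connected_component_set A p = I"
proof -
  obtain \<I> where I: "finite \<I>" "card \<I> = k" "\<forall>I\<in>\<I>. is_closed_interval I"
    "pairwise disjnt \<I>" "A = \<Union>\<I>"
    using assms by (auto simp: union_of_intervals_def)
  show "closed A" using I arc_props(1) by (auto intro!: compact_imp_closed)
  show "A \<subseteq> S1" using I arc_props(4) by blast
  show "k = 0 \<Longrightarrow> A = {}" using I by auto
  show "0 < k \<Longrightarrow> A \<noteq> {}"
  proof -
    assume "0 < k"
    then have "\<I> \<noteq> {}" using I by auto
    then obtain I1 where "I1 \<in> \<I>" by blast
    then have "I1 \<noteq> {}" "I1 \<subseteq> A" using I arc_props(5) by auto
    then show "A \<noteq> {}" by blast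
  qed
  assume p: "p \<in> A"
  then obtain I0 where I0: "I0 \<in> \<I>" "p \<in> I0" using I by blast
  have c0: "is_closed_interval I0" using I I0 by blast
  define Q where "Q = \<Union>(\<I> - {I0})"
  have cQ: "closed Q" unfolding Q_def using I arc_props(1) by (auto intro!: compact_imp_closed)
  have dj: "I0 \<inter> Q = {}" unfolding Q_def using I(4) I0(1)
    by (auto simp: pairwise_def disjnt_def)
  have AU: "A = I0 \<union> Q" unfolding Q_def using I I0 by blast
  have "connected_component_set A p = connected_component_set I0 p"
    unfolding AU using component_in_closed_part[of I0 Q p] arc_props(1)[OF c0] cQ dj I0
    by (simp add: compact_imp_closed)
  also have "\<dots> = I0" using arc_props(2)[OF c0] I0(2) by (simp add: connected_component_eq_self)
  finally show "\<exists>I. is_closed_interval I \<and> connected_component_set A p = I" using c0 by blast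
qed




section \<open>Words\<close>

datatype gen = Ga | Gb | Gbb

fun ev :: "(complex \<Rightarrow> complex) \<Rightarrow> (complex \<Rightarrow> complex) \<Rightarrow> gen list \<Rightarrow> complex \<Rightarrow> complex" where
  "ev a b [] x = x"
| "ev a b (Ga # w) x = a (ev a b w x)"
| "ev a b (Gb # w) x = b (ev a b w x)"
| "ev a b (Gbb # w) x = b (b (ev a b w x))"

fun red :: "gen list \<Rightarrow> bool" where
  "red [] = True"
| "red [g] = True"
| "red (g1 # g2 # w) = ((g1 = Ga) \<noteq> (g2 = Ga) \<and> red (g2 # w))"

fun rcons :: "gen \<Rightarrow> gen list \<Rightarrow> gen list" where
  "rcons Ga (Ga # w) = w"
| "rcons Ga w = Ga # w"
| "rcons Gb (Gb # w) = Gbb # w"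
| "rcons Gb (Gbb # w) = w"
| "rcons Gb w = Gb # w"
| "rcons Gbb (Gb # w) = w"
| "rcons Gbb (Gbb # w) = Gb # w"
| "rcons Gbb w = Gbb # w"

lemma red_tl: "red (g # w) \<Longrightarrow> red w"
  by (cases w) auto

lemma red_rcons: "red w \<Longrightarrow> red (rcons g w)"
proof (cases w)
  case Nil then show ?thesis by (cases g) auto
next
  case (Cons h w')
  assume r: "red w"
  show ?thesis using r Cons by (cases g; cases h; cases w') (auto dest: red_tl)
qed

section \<open>Group facts\<close>

lemma M_comp: "f \<in> markov_group a b \<Longrightarrow> g \<in> markov_group a b \<Longrightarrow> f \<circ> g \<in> markov_group a b"
proof (induction f rule: markov_group.induct)
  case id then show ?case by simp
next
  case (mult_a f) then show ?case by (metis comp_assoc markov_group.mult_a)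
next
  case (mult_b f) then show ?case by (metis comp_assoc markov_group.mult_b)
next
  case (mult_a_inv f) then show ?case by (metis comp_assoc markov_group.mult_a_inv)
next
  case (mult_b_inv f) then show ?case by (metis comp_assoc markov_group.mult_b_inv)
qed

lemma M_a: "a \<in> markov_group a b" using markov_group.mult_a[OF markov_group.id] by simp
lemma M_b: "b \<in> markov_group a b" using markov_group.mult_b[OF markov_group.id] by simp
lemma M_ai: "inv_into S1 a \<in> markov_group a b" using markov_group.mult_a_inv[OF markov_group.id] by simp
lemma M_bi: "inv_into S1 b \<in> markov_group a b" using markov_group.mult_b_inv[OF markov_group.id] by simp

locale gens =
  fixes a b :: "complex \<Rightarrow> complex"
  assumes ha: "homeomorphism S1 S1 a a"
    and hb: "homeomorphism S1 S1 b (b \<circ> b)"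
    and aa: "\<And>x. x \<in> S1 \<Longrightarrow> a (a x) = x"
    and bbb: "\<And>x. x \<in> S1 \<Longrightarrow> b (b (b x)) = x"
begin

lemma aS: "x \<in> S1 \<Longrightarrow> a x \<in> S1" using ha by (auto simp: homeomorphism_def)
lemma bS: "x \<in> S1 \<Longrightarrow> b x \<in> S1" using hb by (auto simp: homeomorphism_def)

lemma ai_eq: "x \<in> S1 \<Longrightarrow> inv_into S1 a x = a x"
proof -
  assume x: "x \<in> S1"
  have inj: "inj_on a S1" by (rule inj_on_inverseI[where g=a]) (rule aa)
  have "inv_into S1 a (a (a x)) = a x" using inj aS[OF x] by (simp add: inv_into_f_f)
  then show ?thesis using aa x by simp
qed

lemma bi_eq: "x \<in> S1 \<Longrightarrow> inv_into S1 b x = b (b x)"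
proof -
  assume x: "x \<in> S1"
  have inj: "inj_on b S1" using hb by (rule inj_on_inverseI[OF homeomorphism_apply1])
  have "inv_into S1 b (b (b (b x))) = b (b x)" using inj bS[OF bS[OF x]] by (simp add: inv_into_f_f)
  then show ?thesis using bbb x by simp
qed

lemma h_ai: "homeomorphism S1 S1 (inv_into S1 a) a"
proof (rule homeomorphism_cong[OF ha refl refl])
  show "\<And>x. x \<in> S1 \<Longrightarrow> inv_into S1 a x = a x" by (rule ai_eq)
qed simp

lemma h_bi: "homeomorphism S1 S1 (inv_into S1 b) b"
proof -
  have "homeomorphism S1 S1 (b \<circ> b) b" using hb by (rule homeomorphism_symD)
  then show ?thesis
  proof (rule homeomorphism_cong[OF _ refl refl])
    show "\<And>x. x \<in> S1 \<Longrightarrow> inv_into S1 b x = (b \<circ> b) x" by (simp add: bi_eq)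
  qed simp
qed

lemma M_homeo: "f \<in> markov_group a b \<Longrightarrow> \<exists>g \<in> markov_group a b. homeomorphism S1 S1 f g"
proof (induction f rule: markov_group.induct)
  case id
  have "homeomorphism S1 S1 id id" using homeomorphism_ident by (simp add: id_def)
  then show ?case using markov_group.id by blast
next
  case (mult_a f)
  then obtain g where g: "g \<in> markov_group a b" "homeomorphism S1 S1 f g" by blast
  have "homeomorphism S1 S1 (a \<circ> f) (g \<circ> a)" by (rule homeomorphism_compose[OF g(2) ha])
  moreover have "g \<circ> a \<in> markov_group a b" using M_comp[OF g(1) M_a] .
  ultimately show ?case by blast
next
  case (mult_b f)
  then obtain g where g: "g \<in> markov_group a b" "homeomorphism S1 S1 f g" by blast
  have "homeomorphism S1 S1 (b \<circ> f) (g \<circ> (b \<circ> b))" by (rule homeomorphism_compose[OF g(2) hb])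
  moreover have "g \<circ> (b \<circ> b) \<in> markov_group a b" using M_comp[OF g(1) M_comp[OF M_b M_b]] .
  ultimately show ?case by blast
next
  case (mult_a_inv f)
  then obtain g where g: "g \<in> markov_group a b" "homeomorphism S1 S1 f g" by blast
  have "homeomorphism S1 S1 (inv_into S1 a \<circ> f) (g \<circ> a)" by (rule homeomorphism_compose[OF g(2) h_ai])
  moreover have "g \<circ> a \<in> markov_group a b" using M_comp[OF g(1) M_a] .
  ultimately show ?case by blast
next
  case (mult_b_inv f)
  then obtain g where g: "g \<in> markov_group a b" "homeomorphism S1 S1 f g" by blast
  have "homeomorphism S1 S1 (inv_into S1 b \<circ> f) (g \<circ> b)" by (rule homeomorphism_compose[OF g(2) h_bi])
  moreover have "g \<circ> b \<in> markov_group a b" using M_comp[OF g(1) M_b] .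
  ultimately show ?case by blast
qed

lemma ev_S1: "x \<in> S1 \<Longrightarrow> ev a b w x \<in> S1"
proof (induction w)
  case Nil then show ?case by simp
next
  case (Cons g w)
  have "ev a b w x \<in> S1" using Cons by simp
  then show ?case by (cases g) (simp_all add: aS bS)
qed

lemma ev_rcons: "x \<in> S1 \<Longrightarrow> ev a b (rcons g w) x = ev a b [g] (ev a b w x)"
proof -
  assume x: "x \<in> S1"
  show ?thesis
  proof (cases w)
    case Nil then show ?thesis by (cases g) auto
  next
    case (Cons h w')
    have y: "ev a b w' x \<in> S1" using ev_S1 x by blast
    show ?thesis using Cons aa[OF y] bbb[OF y] by (cases g; cases h) auto
  qed
qed

lemma M_word: "f \<in> markov_group a b \<Longrightarrow> \<exists>w. red w \<and> (\<forall>x\<in>S1. f x = ev a b w x)"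
proof (induction f rule: markov_group.induct)
  case id
  have "red []" by simp
  then show ?case by (intro exI[of _ "[]"]) auto
next
  case (mult_a f)
  then obtain w where w: "red w" "\<forall>x\<in>S1. f x = ev a b w x" by blast
  show ?case using w red_rcons[OF w(1), of Ga] ev_rcons[of _ Ga w]
    by (intro exI[of _ "rcons Ga w"]) auto
next
  case (mult_b f)
  then obtain w where w: "red w" "\<forall>x\<in>S1. f x = ev a b w x" by blast
  show ?case using w red_rcons[OF w(1), of Gb] ev_rcons[of _ Gb w]
    by (intro exI[of _ "rcons Gb w"]) auto
next
  case (mult_a_inv f)
  then obtain w where w: "red w" "\<forall>x\<in>S1. f x = ev a b w x" by blast
  show ?case using w red_rcons[OF w(1), of Ga] ev_rcons[of _ Ga w] ai_eq ev_S1
    by (intro exI[of _ "rcons Ga w"]) auto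
next
  case (mult_b_inv f)
  then obtain w where w: "red w" "\<forall>x\<in>S1. f x = ev a b w x" by blast
  show ?case using w red_rcons[OF w(1), of Gbb] ev_rcons[of _ Gbb w] bi_eq ev_S1
    by (intro exI[of _ "rcons Gbb w"]) auto
qed

end




context
  fixes a b :: "complex \<Rightarrow> complex" and A B Bi :: "complex set"
  assumes ms: "markov_system a b A B Bi"
begin

lemma aa: "x \<in> S1 \<Longrightarrow> a (a x) = x" using ms by (simp add: markov_system_def)
lemma bbb: "x \<in> S1 \<Longrightarrow> b (b (b x)) = x" using ms by (simp add: markov_system_def)

lemma homeo_a: "homeomorphism S1 S1 a a"
proof -
  obtain g where g: "homeomorphism S1 S1 a g" using ms by (auto simp: markov_system_def homeo_plus_def)
  have aS: "y \<in> S1 \<Longrightarrow> a y \<in> S1" for y using g by (auto simp: homeomorphism_def)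
  have "g y = a y" if y: "y \<in> S1" for y
  proof -
    have "g y = g (a (a y))" using aa y by simp
    also have "\<dots> = a y" using g aS[OF y] by (simp add: homeomorphism_apply1)
    finally show ?thesis .
  qed
  then show ?thesis by (intro homeomorphism_cong[OF g refl refl]) auto
qed

lemma homeo_b: "homeomorphism S1 S1 b (b \<circ> b)"
proof -
  obtain g where g: "homeomorphism S1 S1 b g" using ms by (auto simp: markov_system_def homeo_plus_def)
  have bS: "y \<in> S1 \<Longrightarrow> b y \<in> S1" for y using g by (auto simp: homeomorphism_def)
  have "g y = b (b y)" if y: "y \<in> S1" for y
  proof -
    have "g y = g (b (b (b y)))" using bbb y by simp
    also have "\<dots> = b (b y)" using g bS[OF bS[OF y]] by (simp add: homeomorphism_apply1)
    finally show ?thesis .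
  qed
  then show ?thesis by (intro homeomorphism_cong[OF g refl refl]) auto
qed

lemma gens_ab: "gens a b"
  using homeo_a homeo_b aa bbb by unfold_locales

interpretation G: gens a b by (rule gens_ab)

lemma uoi: "\<exists>k. union_of_intervals k A \<and> union_of_intervals k B \<and> union_of_intervals k Bi"
  using ms by (simp add: markov_system_def)

lemma clA: "closed A" and clB: "closed B" and clBi: "closed Bi"
  and sA: "A \<subseteq> S1" and sB: "B \<subseteq> S1" and sBi: "Bi \<subseteq> S1"
  using uoi uoi_props by blast+

lemma dAB: "A \<inter> B = {}" and dABi: "A \<inter> Bi = {}" and dBBi: "B \<inter> Bi = {}"
  using ms by (auto simp: markov_system_def disjnt_def)

lemma aA: "a ` A = bblocks_union A B Bi" and bA: "b ` A = B" and bB: "b ` B = Bi"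
  using ms by (simp_all add: markov_system_def)

lemma aBB: "a ` bblocks_union A B Bi = A"
proof -
  have "a ` bblocks_union A B Bi = (\<lambda>x. a (a x)) ` A" unfolding aA[symmetric] by (simp add: image_image)
  also have "\<dots> = A" using aa sA by (simp add: subset_iff)
  finally show ?thesis .
qed

lemma bBi: "b ` Bi = A"
proof -
  have "b ` Bi = (\<lambda>x. b (b (b x))) ` A" unfolding bB[symmetric] bA[symmetric] by (simp add: image_image)
  also have "\<dots> = A" using bbb sA by (simp add: subset_iff)
  finally show ?thesis .
qed

lemma bX: "b ` (A \<union> B \<union> Bi) = A \<union> B \<union> Bi"
  using bA bB bBi by (auto simp: image_Un)

lemma clX: "closed (A \<union> B \<union> Bi)" using clA clB clBi by blast
lemma sX: "A \<union> B \<union> Bi \<subseteq> S1" using sA sB sBi by blast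

lemma gap_sub: "G \<in> gaps (A \<union> B \<union> Bi) \<Longrightarrow> G \<subseteq> S1 - (A \<union> B \<union> Bi)"
  unfolding gaps_def using in_components_subset by blast

lemma comp_gap: "C \<in> complementary_gaps A B Bi \<Longrightarrow> C \<in> gaps (A \<union> B \<union> Bi)"
  by (simp add: complementary_gaps_def)

lemma bbu_sub: "bblocks_union A B Bi \<subseteq> S1"
  unfolding bblocks_union_def using sB sBi comp_gap gap_sub by blast

lemma gap_b: "G \<in> gaps (A \<union> B \<union> Bi) \<Longrightarrow> b ` G \<in> gaps (A \<union> B \<union> Bi)"
proof -
  assume G: "G \<in> gaps (A \<union> B \<union> Bi)"
  have "b ` G \<in> components (b ` (S1 - (A \<union> B \<union> Bi)))"
    using G homeo_components[OF homeo_b, of "S1 - (A \<union> B \<union> Bi)" G] by (auto simp: gaps_def)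
  moreover have "b ` (S1 - (A \<union> B \<union> Bi)) = S1 - (A \<union> B \<union> Bi)"
    using homeo_diff[OF homeo_b sX] bX by simp
  ultimately show ?thesis by (simp add: gaps_def)
qed

lemma gap_a_comp: "G \<in> complementary_gaps A B Bi \<Longrightarrow> a ` G \<subseteq> A"
proof -
  assume "G \<in> complementary_gaps A B Bi"
  then have "G \<subseteq> bblocks_union A B Bi" by (auto simp: bblocks_union_def)
  then show ?thesis using aBB by blast
qed

lemma gap_a:
  assumes G: "G \<in> gaps (A \<union> B \<union> Bi)" and nc: "G \<notin> complementary_gaps A B Bi"
  shows "a ` G \<in> gaps (A \<union> B \<union> Bi)"
proof -
  define X where "X = A \<union> B \<union> Bi"
  define R where "R = S1 - (A \<union> bblocks_union A B Bi)"
  have RX: "R \<subseteq> S1 - X" unfolding R_def X_def bblocks_union_def by blast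
  have disjG: "G \<inter> C = {}" if "C \<in> complementary_gaps A B Bi" "G \<noteq> C" "G \<in> gaps X" for G C
    using that comp_gap pairwise_disjoint_components unfolding gaps_def X_def pairwise_def by blast
  have gapR: "H \<subseteq> R" if H: "H \<in> gaps X" "H \<notin> complementary_gaps A B Bi" for H
  proof -
    have "H \<inter> C = {}" if "C \<in> complementary_gaps A B Bi" for C
      using disjG[OF that _ H(1)] H(2) that by blast
    then show ?thesis using gap_sub[of H] H(1) unfolding R_def X_def bblocks_union_def by blast
  qed
  have aR: "a ` R = R"
  proof -
    have "a ` (A \<union> bblocks_union A B Bi) = A \<union> bblocks_union A B Bi"
      using aA aBB by (auto simp: image_Un)
    then show ?thesis unfolding R_def using homeo_diff[OF homeo_a] sA bbu_sub by simp
  qed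
  have GR: "G \<in> components R"
    using components_restrict[of G "S1 - X" R] G gapR[of G] nc RX by (simp add: gaps_def X_def)
  have "a ` G \<in> components (a ` R)"
    using homeo_components[OF homeo_a, of R G] GR RX by auto
  then have K: "a ` G \<in> components R" using aR by simp
  then obtain x where x: "x \<in> R" "a ` G = connected_component_set R x" by (auto simp: components_iff)
  define H where "H = connected_component_set (S1 - X) x"
  have xX: "x \<in> S1 - X" using x RX by blast
  have H: "H \<in> gaps X" unfolding H_def gaps_def using xX by (rule componentsI)
  have Hnc: "H \<notin> complementary_gaps A B Bi"
  proof
    assume "H \<in> complementary_gaps A B Bi"
    then have "H \<subseteq> bblocks_union A B Bi" by (auto simp: bblocks_union_def)
    moreover have "x \<in> H" using xX by (simp add: H_def)
    ultimately show False using x(1) unfolding R_def by blast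
  qed
  have HR: "H \<subseteq> R" using gapR[OF H Hnc] .
  have "H \<subseteq> a ` G" unfolding x(2) H_def
    by (rule connected_component_maximal) (use xX HR H_def in auto)
  moreover have "a ` G \<subseteq> H"
  proof -
    have sub: "connected_component_set R x \<subseteq> S1 - X" using connected_component_subset[of R x] RX by blast
    show ?thesis unfolding x(2) H_def
      by (rule connected_component_maximal) (simp_all add: x(1) sub)
  qed
  ultimately have "a ` G = H" by blast
  then show ?thesis using H X_def by simp
qed


lemma pingpong:
  "red w \<Longrightarrow> G \<in> gaps (A \<union> B \<union> Bi) \<Longrightarrow>
    ev a b w ` G \<in> gaps (A \<union> B \<union> Bi) \<or> (w \<noteq> [] \<and> hd w = Ga \<and> ev a b w ` G \<subseteq> A)
    \<or> (w \<noteq> [] \<and> hd w \<noteq> Ga \<and> ev a b w ` G \<subseteq> B \<union> Bi)"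
proof (induction w)
  case Nil then show ?case by simp
next
  case (Cons g w)
  have rw: "red w" using Cons.prems(1) by (rule red_tl)
  define S where "S = ev a b w ` G"
  have IH: "S \<in> gaps (A \<union> B \<union> Bi) \<or> (w \<noteq> [] \<and> hd w = Ga \<and> S \<subseteq> A)
    \<or> (w \<noteq> [] \<and> hd w \<noteq> Ga \<and> S \<subseteq> B \<union> Bi)" using Cons.IH[OF rw Cons.prems(2)] by (simp add: S_def)
  have im: "ev a b (g # w) ` G = (case g of Ga \<Rightarrow> a ` S | Gb \<Rightarrow> b ` S | Gbb \<Rightarrow> b ` b ` S)"
    unfolding S_def by (cases g) (simp_all add: image_image)
  have alt: "(g = Ga) \<noteq> (hd w = Ga)" if "w \<noteq> []"
    using Cons.prems(1) that by (cases w) auto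
  from IH show ?case
  proof (elim disjE conjE)
    assume gS: "S \<in> gaps (A \<union> B \<union> Bi)"
    show ?thesis
    proof (cases g)
      case Ga
      show ?thesis
      proof (cases "S \<in> complementary_gaps A B Bi")
        case True then show ?thesis using gap_a_comp im Ga by simp
      next
        case False then show ?thesis using gap_a[OF gS] im Ga by simp
      qed
    next
      case Gb then show ?thesis using gap_b[OF gS] im by simp
    next
      case Gbb then show ?thesis using gap_b[OF gap_b[OF gS]] im by simp
    qed
  next
    assume w: "w \<noteq> []" "hd w = Ga" "S \<subseteq> A"
    then have "g \<noteq> Ga" using alt by blast
    then show ?thesis
    proof (cases g)
      case Gb
      have "b ` S \<subseteq> B" using w(3) bA by blast
      then show ?thesis using im Gb by auto
    next
      case Gbb
      have "b ` b ` S \<subseteq> Bi" using w(3) bA bB by blast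
      then show ?thesis using im Gbb by auto
    qed simp
  next
    assume w: "w \<noteq> []" "hd w \<noteq> Ga" "S \<subseteq> B \<union> Bi"
    then have g: "g = Ga" using alt by blast
    have "B \<union> Bi \<subseteq> bblocks_union A B Bi" by (auto simp: bblocks_union_def)
    then have "a ` S \<subseteq> A" using w(3) aBB by blast
    then show ?thesis using im g by auto
  qed
qed

lemma gapS: "G \<in> gaps (A \<union> B \<union> Bi) \<Longrightarrow> G \<subseteq> S1" using gap_sub by blast

lemma pp_M:
  assumes f: "f \<in> markov_group a b" and G: "G \<in> gaps (A \<union> B \<union> Bi)"
  shows "f ` G \<in> gaps (A \<union> B \<union> Bi) \<or> f ` G \<subseteq> A \<union> B \<union> Bi"
proof -
  obtain w where w: "red w" "\<forall>x\<in>S1. f x = ev a b w x" using G.M_word[OF f] by blast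
  have "f ` G = ev a b w ` G" using w(2) gapS[OF G] by (intro image_cong) auto
  then show ?thesis using pingpong[OF w(1) G] by auto
qed

abbreviation Xi where "Xi \<equiv> X_infty a b (A \<union> B \<union> Bi)"

lemma Xi_mem: "x \<in> Xi \<longleftrightarrow> x \<in> S1 \<and> (\<forall>f\<in>markov_group a b. f x \<in> A \<union> B \<union> Bi)"
  unfolding X_infty_def using markov_group.id by blast

lemma Xi_sub: "Xi \<subseteq> A \<union> B \<union> Bi"
  using Xi_mem markov_group.id by fastforce

lemma M_S1: "f \<in> markov_group a b \<Longrightarrow> x \<in> S1 \<Longrightarrow> f x \<in> S1"
  using G.M_homeo by (metis homeomorphism_image1 image_eqI)

lemma Xi_f:
  assumes f: "f \<in> markov_group a b" and x: "x \<in> S1"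
  shows "f x \<in> Xi \<longleftrightarrow> x \<in> Xi"
proof -
  obtain g where g: "g \<in> markov_group a b" "homeomorphism S1 S1 f g" using G.M_homeo[OF f] by blast
  show ?thesis
  proof
    assume fx: "f x \<in> Xi"
    have "h x \<in> A \<union> B \<union> Bi" if h: "h \<in> markov_group a b" for h
    proof -
      have "(h \<circ> g) (f x) \<in> A \<union> B \<union> Bi" using fx M_comp[OF h g(1)] Xi_mem by blast
      then show ?thesis using g(2) x by (simp add: homeomorphism_apply1)
    qed
    then show "x \<in> Xi" using x Xi_mem by blast
  next
    assume xX: "x \<in> Xi"
    have "h (f x) \<in> A \<union> B \<union> Bi" if h: "h \<in> markov_group a b" for h
      using xX M_comp[OF h f] Xi_mem by (metis comp_apply)
    then show "f x \<in> Xi" using M_S1[OF f x] Xi_mem by blast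
  qed
qed

lemma endpoint:
  assumes G: "G \<in> gaps (A \<union> B \<union> Bi)" and p: "p \<in> closure G" "p \<notin> G" "p \<in> S1"
  shows "p \<in> Xi"
proof -
  have "f p \<in> A \<union> B \<union> Bi" if f: "f \<in> markov_group a b" for f
  proof (rule ccontr)
    assume fp: "f p \<notin> A \<union> B \<union> Bi"
    obtain f' where f': "homeomorphism S1 S1 f f'" using G.M_homeo[OF f] by blast
    have fpS: "f p \<in> S1" using M_S1[OF f p(3)] .
    define H where "H = connected_component_set (S1 - (A \<union> B \<union> Bi)) (f p)"
    have H: "H \<in> components (S1 - (A \<union> B \<union> Bi))" unfolding H_def using fp fpS by (intro componentsI) auto
    have Ho: "openin (top_of_set S1) H" using gap_openin[OF clX H] .
    have "openin (top_of_set S1) (S1 \<inter> f -` H)"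
      using continuous_openin_preimage[OF homeomorphism_cont1[OF f'] _ Ho] M_S1[OF f] by blast
    then obtain W where W: "open W" "S1 \<inter> f -` H = S1 \<inter> W" by (auto simp: openin_open)
    have pH: "f p \<in> H" unfolding H_def using fp fpS by simp
    then have "p \<in> W" using W p(3) by blast
    then have "W \<inter> closure G \<noteq> {}" using p(1) by blast
    then have "W \<inter> G \<noteq> {}" using open_Int_closure_eq_empty[OF W(1)] by blast
    then obtain y where y: "y \<in> W" "y \<in> G" by blast
    have yS: "y \<in> S1" using y(2) gapS[OF G] by blast
    then have fyH: "f y \<in> H" using W y(1) by blast
    have HX: "H \<subseteq> S1 - (A \<union> B \<union> Bi)" using H in_components_subset by blast
    have "\<not> f ` G \<subseteq> A \<union> B \<union> Bi" using fyH HX y(2) by blast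
    then have fG: "f ` G \<in> gaps (A \<union> B \<union> Bi)" using pp_M[OF f G] by blast
    obtain z where z: "z \<in> S1 - (A \<union> B \<union> Bi)" "f ` G = connected_component_set (S1 - (A \<union> B \<union> Bi)) z"
      using fG by (auto simp: gaps_def components_iff)
    have "f ` G = connected_component_set (S1 - (A \<union> B \<union> Bi)) (f y)"
      using z(2) y(2) connected_component_eq by (metis imageI)
    moreover have "H = connected_component_set (S1 - (A \<union> B \<union> Bi)) (f y)"
      using fyH H_def connected_component_eq by metis
    ultimately have "f p \<in> f ` G" using pH by simp
    then obtain q where q: "q \<in> G" "f q = f p" by (metis imageE)
    have "q = p" using q f' p(3) gapS[OF G] by (metis homeomorphism_apply1 subsetD)
    then show False using q p(2) by simp
  qed
  then show ?thesis using p(3) Xi_mem by blast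
qed

lemma gap_Xi:
  assumes G: "G \<in> gaps (A \<union> B \<union> Bi)"
  shows "G \<in> gaps Xi"
proof -
  obtain x0 where x0: "x0 \<in> S1 - (A \<union> B \<union> Bi)" "G = connected_component_set (S1 - (A \<union> B \<union> Bi)) x0"
    using G by (auto simp: gaps_def components_iff)
  have sub: "S1 - (A \<union> B \<union> Bi) \<subseteq> S1 - Xi" using Xi_sub by blast
  define K where "K = connected_component_set (S1 - Xi) x0"
  have GK: "G \<subseteq> K" unfolding x0(2) K_def using sub by (rule connected_component_mono)
  have KS: "K \<subseteq> S1 - Xi" unfolding K_def by (rule connected_component_subset)
  have cK: "connected K" unfolding K_def by simp
  have oG: "openin (top_of_set K) G"
    using openin_subset_trans[OF gap_openin[OF clX, of G] GK] G KS by (auto simp: gaps_def)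
  have "K \<inter> closure G = G"
  proof
    show "G \<subseteq> K \<inter> closure G" using GK closure_subset by blast
    show "K \<inter> closure G \<subseteq> G"
    proof
      fix p assume p: "p \<in> K \<inter> closure G"
      show "p \<in> G"
      proof (rule ccontr)
        assume "p \<notin> G"
        then have "p \<in> Xi" using endpoint[OF G] p KS by blast
        then show False using p KS by blast
      qed
    qed
  qed
  then have cG: "closedin (top_of_set K) G" unfolding closedin_closed by (metis closed_closure)
  have "x0 \<in> G" unfolding x0(2) using x0(1) by simp
  then have "G \<noteq> {}" by blast
  then have "G = K" using cK oG cG unfolding connected_clopen by blast
  moreover have "K \<in> components (S1 - Xi)" unfolding K_def using x0(1) sub by (intro componentsI) blast
  ultimately show ?thesis by (simp add: gaps_def)
qed

lemma gapXi_rep: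
  assumes J: "J \<in> gaps Xi"
  shows "\<exists>f\<in>markov_group a b. \<exists>G\<in>gaps (A \<union> B \<union> Bi). J = f ` G"
proof -
  obtain y where y: "y \<in> S1 - Xi" "J = connected_component_set (S1 - Xi) y"
    using J by (auto simp: gaps_def components_iff)
  obtain f where f: "f \<in> markov_group a b" "f y \<notin> A \<union> B \<union> Bi" using y(1) Xi_mem by blast
  obtain f' where f': "f' \<in> markov_group a b" "homeomorphism S1 S1 f f'" using G.M_homeo[OF f(1)] by blast
  have f'h: "homeomorphism S1 S1 f' f" using f'(2) by (rule homeomorphism_symD)
  have fyS: "f y \<in> S1" using M_S1[OF f(1)] y(1) by blast
  define G where "G = connected_component_set (S1 - (A \<union> B \<union> Bi)) (f y)"
  have Gg: "G \<in> gaps (A \<union> B \<union> Bi)" unfolding G_def gaps_def using f(2) fyS by (intro componentsI) blast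
  have GX: "G \<subseteq> S1 - (A \<union> B \<union> Bi)" unfolding G_def by (rule connected_component_subset)
  have fyG: "f y \<in> G" unfolding G_def using f(2) fyS by simp
  have yy: "f' (f y) = y" using f'(2) y(1) by (simp add: homeomorphism_apply1)
  have A1: "f' ` G \<subseteq> J" unfolding y(2)
  proof (rule connected_component_maximal)
    show "y \<in> f' ` G" using fyG yy by force
    show "connected (f' ` G)"
      using GX by (intro connected_continuous_image continuous_on_subset[OF homeomorphism_cont1[OF f'h]])
        (auto simp: G_def)
    show "f' ` G \<subseteq> S1 - Xi"
    proof
      fix w assume "w \<in> f' ` G"
      then obtain z where z: "z \<in> G" "w = f' z" by blast
      have zS: "z \<in> S1" "z \<notin> Xi" using z GX Xi_sub by auto
      then show "w \<in> S1 - Xi" using z Xi_f[OF f'(1) zS(1)] M_S1[OF f'(1)] by auto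
    qed
  qed
  have GXi: "G \<in> gaps Xi" using gap_Xi[OF Gg] .
  have Geq: "G = connected_component_set (S1 - Xi) (f y)"
  proof -
    obtain z where "G = connected_component_set (S1 - Xi) z" using GXi by (auto simp: gaps_def components_iff)
    then show ?thesis using fyG connected_component_eq by metis
  qed
  have "f ` J \<subseteq> G" unfolding Geq
  proof (rule connected_component_maximal)
    show "f y \<in> f ` J" using y by simp
    have JS: "J \<subseteq> S1 - Xi" unfolding y(2) by (rule connected_component_subset)
    show "connected (f ` J)"
      using JS by (intro connected_continuous_image continuous_on_subset[OF homeomorphism_cont1[OF f'(2)]])
        (auto simp: y(2))
    show "f ` J \<subseteq> S1 - Xi"
    proof
      fix w assume "w \<in> f ` J"
      then obtain z where z: "z \<in> J" "w = f z" by blast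
      have zS: "z \<in> S1" "z \<notin> Xi" using z JS by auto
      then show "w \<in> S1 - Xi" using z Xi_f[OF f(1) zS(1)] M_S1[OF f(1)] by auto
    qed
  qed
  then have "J \<subseteq> f' ` G"
  proof -
    assume fJ: "f ` J \<subseteq> G"
    have JS: "J \<subseteq> S1" unfolding y(2) using connected_component_subset by blast
    show ?thesis
    proof
      fix z assume z: "z \<in> J"
      then have "f' (f z) = z" using f'(2) JS by (simp add: homeomorphism_apply1 subsetD)
      then show "z \<in> f' ` G" using fJ z by (metis imageI subsetD)
    qed
  qed
  then have "J = f' ` G" using A1 by blast
  then show ?thesis using f'(1) Gg by blast
qed


definition orb where "orb S T \<longleftrightarrow> (\<exists>f\<in>markov_group a b. f ` S = T)"

lemma orb_refl: "orb S S" unfolding orb_def by (intro bexI[of _ id]) (simp_all add: markov_group.id)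

lemma orb_trans: "orb S T \<Longrightarrow> orb T U \<Longrightarrow> orb S U"
  unfolding orb_def by (metis M_comp image_comp)

lemma orb_sym: "S \<subseteq> S1 \<Longrightarrow> orb S T \<Longrightarrow> orb T S"
proof -
  assume S: "S \<subseteq> S1" and "orb S T"
  then obtain f where f: "f \<in> markov_group a b" "f ` S = T" by (auto simp: orb_def)
  obtain g where g: "g \<in> markov_group a b" "homeomorphism S1 S1 f g" using G.M_homeo[OF f(1)] by blast
  have "g ` T = (\<lambda>x. g (f x)) ` S" using f(2) by (auto simp: image_image)
  also have "\<dots> = (\<lambda>x. x) ` S" using g(2) S by (intro image_cong) (auto simp: homeomorphism_apply1)
  finally show "orb T S" using g(1) by (auto simp: orb_def)
qed

lemma orb_gen: "f \<in> markov_group a b \<Longrightarrow> orb S (f ` S)" unfolding orb_def by blast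

lemma principal_sub: "principal_gaps A B Bi \<subseteq> gaps (A \<union> B \<union> Bi)"
  by (auto simp: principal_gaps_def)

lemma principal_orbit:
  assumes J: "J \<in> principal_gaps A B Bi" and K: "K \<in> principal_gaps A B Bi"
  shows "orb J K"
proof -
  define P where "P = principal_gaps A B Bi"
  define E where "E = {(J, a ` J) | J. J \<in> P} \<union> {(J, b ` J) | J. J \<in> P \<and> b ` J \<in> P}
              \<union> {(J, inv_into S1 b ` J) | J. J \<in> P \<and> inv_into S1 b ` J \<in> P}"
  have conn: "\<forall>J\<in>P. \<forall>K\<in>P. (J, K) \<in> (E \<union> E\<inverse>)\<^sup>*"
    using ms unfolding markov_system_def Let_def P_def E_def by blast
  have PS: "S \<in> P \<Longrightarrow> S \<subseteq> S1" for S using principal_sub gapS P_def by blast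
  have Eorb: "orb S T \<and> S \<subseteq> S1" if "(S, T) \<in> E" for S T
    using that PS orb_gen[OF M_a] orb_gen[OF M_b] orb_gen[OF M_bi] unfolding E_def by blast
  have "(J, K) \<in> (E \<union> E\<inverse>)\<^sup>*" using conn J K P_def by blast
  then show ?thesis
  proof (induction rule: rtrancl_induct)
    case base then show ?case by (rule orb_refl)
  next
    case (step y z)
    have "orb y z"
    proof (cases "(y, z) \<in> E")
      case True then show ?thesis using Eorb by blast
    next
      case False
      then have "(z, y) \<in> E" using step(2) by blast
      then show ?thesis using Eorb orb_sym by blast
    qed
    then show ?case using step(3) orb_trans by blast
  qed
qed

lemma Bne: "A \<noteq> {} \<Longrightarrow> B \<noteq> {}" using bA by blast
lemma Bine: "A \<noteq> {} \<Longrightarrow> Bi \<noteq> {}" using bA bB by blast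

lemma cA: "p \<in> A \<Longrightarrow> connected_component_set (A \<union> B \<union> Bi) p = connected_component_set A p"
proof -
  assume p: "p \<in> A"
  have "A \<union> B \<union> Bi = A \<union> (B \<union> Bi)" by blast
  moreover have "A \<inter> (B \<union> Bi) = {}" using dAB dABi by blast
  moreover have "closed (B \<union> Bi)" using clA clB clBi by blast
  ultimately show ?thesis using component_in_closed_part[of A "B \<union> Bi" p] clA clB clBi p by metis
qed

lemma cB: "p \<in> B \<Longrightarrow> connected_component_set (A \<union> B \<union> Bi) p = connected_component_set B p"
proof -
  assume p: "p \<in> B"
  have "A \<union> B \<union> Bi = B \<union> (A \<union> Bi)" by blast
  moreover have "B \<inter> (A \<union> Bi) = {}" using dAB dBBi by blast
  moreover have "closed (A \<union> Bi)" using clA clB clBi by blast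
  ultimately show ?thesis using component_in_closed_part[of B "A \<union> Bi" p] clA clB clBi p by metis
qed

lemma cBi: "p \<in> Bi \<Longrightarrow> connected_component_set (A \<union> B \<union> Bi) p = connected_component_set Bi p"
proof -
  assume p: "p \<in> Bi"
  have "A \<union> B \<union> Bi = Bi \<union> (A \<union> B)" by blast
  moreover have "Bi \<inter> (A \<union> B) = {}" using dABi dBBi by blast
  moreover have "closed (A \<union> B)" using clA clB clBi by blast
  ultimately show ?thesis using component_in_closed_part[of Bi "A \<union> B" p] clA clB clBi p by metis
qed

lemma comp_type: "p \<in> A \<union> B \<union> Bi \<Longrightarrow>
   (\<exists>T \<in> {A, B, Bi}. p \<in> T \<and> connected_component_set (A \<union> B \<union> Bi) p = connected_component_set T p)"
  using cA cB cBi by blast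

lemma comp_interval: "p \<in> A \<union> B \<union> Bi \<Longrightarrow> \<exists>I. is_closed_interval I \<and> connected_component_set (A \<union> B \<union> Bi) p = I"
proof -
  assume p: "p \<in> A \<union> B \<union> Bi"
  obtain k where k: "union_of_intervals k A" "union_of_intervals k B" "union_of_intervals k Bi" using uoi by blast
  show ?thesis using p cA cB cBi uoi_props(5)[OF k(1)] uoi_props(5)[OF k(2)] uoi_props(5)[OF k(3)] by auto
qed

lemma two_components:
  assumes Ane: "A \<noteq> {}" and G: "G \<in> gaps (A \<union> B \<union> Bi)"
  shows "\<exists>p1 p2. p1 \<in> closure G \<inter> (A \<union> B \<union> Bi) \<and> p2 \<in> closure G \<inter> (A \<union> B \<union> Bi) \<and>
     connected_component_set (A \<union> B \<union> Bi) p1 \<noteq> connected_component_set (A \<union> B \<union> Bi) p2"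
proof (rule ccontr)
  define X where "X = A \<union> B \<union> Bi"
  assume "\<not> ?thesis"
  then have same: "\<And>p1 p2. p1 \<in> closure G \<inter> X \<Longrightarrow> p2 \<in> closure G \<inter> X \<Longrightarrow>
     connected_component_set X p1 = connected_component_set X p2" unfolding X_def by blast
  obtain I where I: "closure G \<inter> X \<subseteq> I" "I \<subseteq> X" "connected (S1 - I)"
     "I = {} \<or> (\<exists>p\<in>X. I = connected_component_set X p)"
  proof (cases "closure G \<inter> X = {}")
    case True
    then show ?thesis using that[of "{}"] S1_connected by simp
  next
    case False
    then obtain p1 where p1: "p1 \<in> closure G \<inter> X" by blast
    define I where "I = connected_component_set X p1"
    have "closure G \<inter> X \<subseteq> I"
    proof
      fix q assume q: "q \<in> closure G \<inter> X"
      then have "q \<in> connected_component_set X q" by simp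
      then show "q \<in> I" using same[OF q p1] I_def by simp
    qed
    moreover have "I \<subseteq> X" unfolding I_def by (rule connected_component_subset)
    moreover have "connected (S1 - I)"
      using comp_interval[of p1] p1 arc_props(3) unfolding I_def X_def by blast
    ultimately show ?thesis using that p1 I_def by blast
  qed
  have GX: "G \<subseteq> S1 - X" using gap_sub[OF G] X_def by simp
  have GI: "G \<subseteq> S1 - I" using GX I(2) by blast
  have oG: "openin (top_of_set (S1 - I)) G"
    using openin_subset_trans[OF gap_openin[OF clX, of G] GI] G by (auto simp: gaps_def)
  have "(S1 - I) \<inter> closure G = G"
  proof
    show "G \<subseteq> (S1 - I) \<inter> closure G" using GI closure_subset by blast
    show "(S1 - I) \<inter> closure G \<subseteq> G"
    proof
      fix q assume q: "q \<in> (S1 - I) \<inter> closure G"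
      show "q \<in> G"
      proof (cases "q \<in> X")
        case True then show ?thesis using q I(1) by blast
      next
        case False
        then show ?thesis using gap_closure[OF clX, of G q] G q unfolding gaps_def X_def by blast
      qed
    qed
  qed
  then have cG: "closedin (top_of_set (S1 - I)) G" unfolding closedin_closed by (metis closed_closure)
  have "G \<noteq> {}" using G in_components_nonempty unfolding gaps_def by blast
  then have GeqI: "G = S1 - I" using I(3) oG cG unfolding connected_clopen by blast
  have XI: "X \<subseteq> I" using GeqI GX sX X_def by blast
  have Bn: "B \<noteq> {}" "Bi \<noteq> {}" using Bne Bine Ane by auto
  show False
  proof (cases "I = {}")
    case True then show ?thesis using XI Ane X_def by blast
  next
    case False
    then obtain p where p: "p \<in> X" "I = connected_component_set X p" using I(4) by blast
    obtain T where T: "T \<in> {A, B, Bi}" "I = connected_component_set T p"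
      using comp_type[of p] p X_def by auto
    have "I \<subseteq> T" using T(2) connected_component_subset by blast
    then have "X \<subseteq> T" using XI by blast
    then show ?thesis using T(1) Ane Bn dAB dABi dBBi X_def by blast
  qed
qed

lemma between_sym: "between J I1 I2 \<Longrightarrow> between J I2 I1"
  by (auto simp: between_def)

lemma gap_types:
  assumes Ane: "A \<noteq> {}" and G: "G \<in> gaps (A \<union> B \<union> Bi)"
  shows "G \<in> principal_gaps A B Bi \<or> G \<in> complementary_gaps A B Bi"
proof -
  define X where "X = A \<union> B \<union> Bi"
  obtain p1 p2 where p: "p1 \<in> closure G \<inter> X" "p2 \<in> closure G \<inter> X"
    "connected_component_set X p1 \<noteq> connected_component_set X p2"
    using two_components[OF Ane G] X_def by blast
  define I1 where "I1 = connected_component_set X p1"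
  define I2 where "I2 = connected_component_set X p2"
  have btw: "between G I1 I2" unfolding between_def I1_def I2_def using p by auto
  have nc: "no_two_consecutive X A" "no_two_consecutive X B" "no_two_consecutive X Bi"
    using ms by (simp_all add: markov_system_def X_def)
  have GX: "G \<in> gaps X" using G X_def by simp
  have ty: "\<And>q. q \<in> X \<Longrightarrow> (q \<in> A \<and> connected_component_set X q \<in> components A) \<or>
     (q \<in> B \<and> connected_component_set X q \<in> components B) \<or> (q \<in> Bi \<and> connected_component_set X q \<in> components Bi)"
    unfolding X_def using cA cB cBi componentsI by fastforce
  have t1: "(p1 \<in> A \<and> I1 \<in> components A) \<or> (p1 \<in> B \<and> I1 \<in> components B) \<or> (p1 \<in> Bi \<and> I1 \<in> components Bi)"
    using ty[of p1] p(1) I1_def by blast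
  have t2: "(p2 \<in> A \<and> I2 \<in> components A) \<or> (p2 \<in> B \<and> I2 \<in> components B) \<or> (p2 \<in> Bi \<and> I2 \<in> components Bi)"
    using ty[of p2] p(2) I2_def by blast
  from t1 t2 btw between_sym[OF btw] nc GX show ?thesis
    unfolding principal_gaps_def complementary_gaps_def no_two_consecutive_def X_def
    by blast
qed

lemma homeo_bb: "homeomorphism S1 S1 (b \<circ> b) (b \<circ> b \<circ> (b \<circ> b))"
  using homeomorphism_compose[OF homeo_b homeo_b] .

lemma comp_to_principal:
  assumes C: "C \<in> complementary_gaps A B Bi"
  shows "\<exists>S \<in> principal_gaps A B Bi. orb C S"
proof -
  define f where "f = b \<circ> b"
  have fM: "f \<in> markov_group a b" unfolding f_def using M_comp[OF M_b M_b] .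
  obtain I1 I2 where I: "I1 \<in> components B" "I2 \<in> components Bi" "between C I1 I2"
    using C by (auto simp: complementary_gaps_def)
  have Cg: "C \<in> gaps (A \<union> B \<union> Bi)" using C comp_gap by blast
  have fC: "f ` C \<in> gaps (A \<union> B \<union> Bi)" unfolding f_def using gap_b[OF gap_b[OF Cg]] by (simp add: image_comp)
  have fX: "f ` Y = b ` (b ` Y)" for Y unfolding f_def by (simp add: image_image)
  have fB: "f ` B = A" using fX[of B] bB bBi by simp
  have fBi: "f ` Bi = B" using fX[of Bi] bBi bA by simp
  have hf: "homeomorphism S1 S1 f (b \<circ> b \<circ> (b \<circ> b))" unfolding f_def by (rule homeo_bb)
  have J1: "f ` I1 \<in> components A" using homeo_components[OF hf sB I(1)] fB by simp
  have J2: "f ` I2 \<in> components B" using homeo_components[OF hf sBi I(2)] fBi by simp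
  have CS: "closure C \<subseteq> S1" using gapS[OF Cg] S1_closed closure_minimal by blast
  have clf: "f ` closure C \<subseteq> closure (f ` C)"
    using CS closure_subset[of "f ` C"]
    by (intro image_closure_subset continuous_on_subset[OF homeomorphism_cont1[OF hf]]) auto
  have I1s: "I1 \<subseteq> B" "I2 \<subseteq> Bi" using I in_components_subset by blast+
  have ne: "I1 \<noteq> {}" using I(1) in_components_nonempty by blast
  have "f ` I1 \<noteq> f ` I2"
  proof
    assume eq: "f ` I1 = f ` I2"
    have "f ` I1 \<subseteq> A" "f ` I2 \<subseteq> B" using I1s fB fBi by blast+
    then show False using eq ne dAB by blast
  qed
  moreover have "closure (f ` C) \<inter> f ` I1 \<noteq> {}" "closure (f ` C) \<inter> f ` I2 \<noteq> {}"
    using I(3) clf unfolding between_def by blast+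
  ultimately have "between (f ` C) (f ` I1) (f ` I2)" by (simp add: between_def)
  then have "f ` C \<in> principal_gaps A B Bi" using fC J1 J2 by (auto simp: principal_gaps_def)
  then show ?thesis using orb_gen[OF fM] by blast
qed


lemma main_result:
  "gaps Xi \<noteq> {} \<and> (\<forall>J\<in>gaps Xi. \<forall>K\<in>gaps Xi. \<exists>f\<in>markov_group a b. f ` J = K)"
proof (cases "A = {}")
  case True
  then have "B = {}" "Bi = {}" using bA bB by auto
  then have "Xi = {}" using Xi_sub True by blast
  then have gg: "gaps Xi = {S1}" unfolding gaps_def using S1_connected
    by (simp add: components_eq_sing_iff S1_def)
  show ?thesis unfolding gg using markov_group.id by (intro conjI ballI bexI[of _ id]) auto
next
  case False
  have Bn: "B \<noteq> {}" using Bne False by blast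
  have "\<not> S1 \<subseteq> A \<union> B \<union> Bi"
  proof
    assume S: "S1 \<subseteq> A \<union> B \<union> Bi"
    obtain x where x: "x \<in> A" using False by blast
    have "S1 \<subseteq> A"
      using x sA clA clB clBi dAB dABi S
      by (intro connected_sep[OF S1_connected, of A "B \<union> Bi" x]) auto
    then show False using sB Bn dAB by blast
  qed
  then obtain x where x: "x \<in> S1 - (A \<union> B \<union> Bi)" by blast
  then have "x \<in> S1 - Xi" using Xi_sub by blast
  then have ne: "gaps Xi \<noteq> {}" unfolding gaps_def by auto
  have toP: "\<exists>P \<in> principal_gaps A B Bi. orb G P" if G: "G \<in> gaps (A \<union> B \<union> Bi)" for G
    using gap_types[OF False G] comp_to_principal orb_refl by blast
  have "orb J K" if J: "J \<in> gaps Xi" and K: "K \<in> gaps Xi" for J K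
  proof -
    obtain g1 G1 where g1: "g1 \<in> markov_group a b" "G1 \<in> gaps (A \<union> B \<union> Bi)" "J = g1 ` G1"
      using gapXi_rep[OF J] by blast
    obtain g2 G2 where g2: "g2 \<in> markov_group a b" "G2 \<in> gaps (A \<union> B \<union> Bi)" "K = g2 ` G2"
      using gapXi_rep[OF K] by blast
    obtain P1 where P1: "P1 \<in> principal_gaps A B Bi" "orb G1 P1" using toP[OF g1(2)] by blast
    obtain P2 where P2: "P2 \<in> principal_gaps A B Bi" "orb G2 P2" using toP[OF g2(2)] by blast
    have "orb J G1" using orb_sym[OF gapS[OF g1(2)] orb_gen[OF g1(1)]] g1(3) by simp
    moreover have "orb P1 P2" using principal_orbit[OF P1(1) P2(1)] .
    moreover have "orb P2 G2" using orb_sym[OF _ P2(2)] gapS[OF g2(2)] by blast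
    moreover have "orb G2 K" using orb_gen[OF g2(1)] g2(3) by simp
    ultimately show ?thesis using P1(2) orb_trans by meson
  qed
  then show ?thesis using ne unfolding orb_def by blast
qed

end

theorem lemma10p8:
  assumes "markov_system a b A B Bi"
  shows "gaps (X_infty a b (A \<union> B \<union> Bi)) \<noteq> {} \<and>
         (\<forall>J\<in>gaps (X_infty a b (A \<union> B \<union> Bi)). \<forall>K\<in>gaps (X_infty a b (A \<union> B \<union> Bi)).
            \<exists>f\<in>markov_group a b. f ` J = K)"
  using main_result[OF assms] .


end
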